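(* Let $G$ be an outerplanar graph with a plane embedding in which the boundary of the outer face is a Hamiltonian cycle $C$ of $G$ (e.g. $G$ maximal outerplanar on at least 3 vertices), and let $\mathcal H,\mathcal K$ be non-piercing families of subgraphs of $G$. Then the cycle intersection system $(C,\{V(H)\}_{H\in\mathcal H},\{V(K)\}_{K\in\mathcal K})$ satisfies the strong $axax$-free property.
   Context: A subgraph $H$ of $G$ is identified with its vertex set $V(H)$ (subgraphs are induced). A family $\mathcal H$ of subgraphs of $G$ is non-piercing if every $H\in\mathcal H$ induces a connected subgraph of $G$ and, for all $H,H'\in\mathcal H$, $G[V(H)\setminus V(H')]$ is connected (an empty vertex set is regarded as connected). Let $C$ be a cycle with a fixed cyclic orientation; "vertices $p_1,p_2,p_3,p_4$ in cyclic order" means they are four distinct vertices met in this order when traversing $C$. For families $\mathcal H,\mathcal K$ of vertex subsets of $C$: a pair $H,H'\in\mathcal H$ is an $axax$-pair if there are vertices $a_1,x_1,a_2,x_2$ in cyclic order with $a_1,a_2\in H\setminus H'$ and $x_1,x_2\in H'$; $(C,\mathcal H)$ is $axax$-free if it has no $axax$-pair; $(C,\mathcal H,\mathcal K)$ satisfies the intersection property if for all $H\in\mathcal H$, $K\in\mathcal K$ having vertices $h_1,k_1,h_2,k_2$ in cyclic order with $h_1,h_2\in H$, $k_1,k_2\in K$, we have $H\cap K\ne\emptyset$; and $(C,\mathcal H,\mathcal K)$ is strong $axax$-free if $(C,\mathcal H)$ and $(C,\mathcal K)$ are both $axax$-free and the intersection property holds. *)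

theory Defs
  imports Main
begin

definition simple_graph :: "'a set \<Rightarrow> ('a \<Rightarrow> 'a \<Rightarrow> bool) \<Rightarrow> bool" where
  "simple_graph V E \<longleftrightarrow> finite V \<and> (\<forall>u v. E u v \<longrightarrow> u \<in> V \<and> v \<in> V \<and> u \<noteq> v \<and> E v u)"

text \<open>The induced subgraph G[S] is connected (the empty set counts as connected).\<close>
definition induced_connected :: "('a \<Rightarrow> 'a \<Rightarrow> bool) \<Rightarrow> 'a set \<Rightarrow> bool" where
  "induced_connected E S \<longleftrightarrow>
     (\<forall>x\<in>S. \<forall>y\<in>S. (\<lambda>u v. E u v \<and> u \<in> S \<and> v \<in> S)\<^sup>*\<^sup>* x y)"

definition ham_cycle :: "'a set \<Rightarrow> ('a \<Rightarrow> 'a \<Rightarrow> bool) \<Rightarrow> 'a list \<Rightarrow> bool" where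
  "ham_cycle V E cyc \<longleftrightarrow> distinct cyc \<and> set cyc = V \<and> length cyc \<ge> 3 \<and>
     (\<forall>i < length cyc. E (cyc ! i) (cyc ! ((i + 1) mod length cyc)))"

definition cyc_order :: "'a list \<Rightarrow> 'a \<Rightarrow> 'a \<Rightarrow> 'a \<Rightarrow> 'a \<Rightarrow> bool" where
  "cyc_order cyc p1 p2 p3 p4 \<longleftrightarrow>
     (\<exists>i1 i2 i3 i4. i1 < length cyc \<and> i2 < length cyc \<and> i3 < length cyc \<and> i4 < length cyc \<and>
        cyc ! i1 = p1 \<and> cyc ! i2 = p2 \<and> cyc ! i3 = p3 \<and> cyc ! i4 = p4 \<and>
        ((i1 < i2 \<and> i2 < i3 \<and> i3 < i4) \<or> (i2 < i3 \<and> i3 < i4 \<and> i4 < i1) \<or>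
         (i3 < i4 \<and> i4 < i1 \<and> i1 < i2) \<or> (i4 < i1 \<and> i1 < i2 \<and> i2 < i3)))"

text \<open>Outerplanar with a plane embedding whose outer face boundary is the Hamiltonian cycle cyc:
  combinatorially, cyc is a Hamiltonian cycle and no two edges (chords) cross with respect to cyc.\<close>
definition outerplanar_ham :: "'a set \<Rightarrow> ('a \<Rightarrow> 'a \<Rightarrow> bool) \<Rightarrow> 'a list \<Rightarrow> bool" where
  "outerplanar_ham V E cyc \<longleftrightarrow> simple_graph V E \<and> ham_cycle V E cyc \<and>
     \<not> (\<exists>a b c d. cyc_order cyc a b c d \<and> E a c \<and> E b d)"

definition non_piercing :: "'a set \<Rightarrow> ('a \<Rightarrow> 'a \<Rightarrow> bool) \<Rightarrow> 'a set set \<Rightarrow> bool" where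
  "non_piercing V E \<H> \<longleftrightarrow>
     (\<forall>H\<in>\<H>. H \<subseteq> V \<and> induced_connected E H) \<and>
     (\<forall>H\<in>\<H>. \<forall>H'\<in>\<H>. induced_connected E (H - H'))"

definition axax_pair :: "'a list \<Rightarrow> 'a set \<Rightarrow> 'a set \<Rightarrow> bool" where
  "axax_pair cyc H H' \<longleftrightarrow>
     (\<exists>a1 x1 a2 x2. cyc_order cyc a1 x1 a2 x2 \<and> a1 \<in> H - H' \<and> a2 \<in> H - H' \<and> x1 \<in> H' \<and> x2 \<in> H')"

definition axax_free :: "'a list \<Rightarrow> 'a set set \<Rightarrow> bool" where
  "axax_free cyc \<H> \<longleftrightarrow> (\<forall>H\<in>\<H>. \<forall>H'\<in>\<H>. \<not> axax_pair cyc H H')"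

definition intersection_property :: "'a list \<Rightarrow> 'a set set \<Rightarrow> 'a set set \<Rightarrow> bool" where
  "intersection_property cyc \<H> \<K> \<longleftrightarrow>
     (\<forall>H\<in>\<H>. \<forall>K\<in>\<K>.
        (\<exists>h1 k1 h2 k2. cyc_order cyc h1 k1 h2 k2 \<and> h1 \<in> H \<and> h2 \<in> H \<and> k1 \<in> K \<and> k2 \<in> K)
        \<longrightarrow> H \<inter> K \<noteq> {})"

definition strong_axax_free :: "'a list \<Rightarrow> 'a set set \<Rightarrow> 'a set set \<Rightarrow> bool" where
  "strong_axax_free cyc \<H> \<K> \<longleftrightarrow>
     axax_free cyc \<H> \<and> axax_free cyc \<K> \<and> intersection_property cyc \<H> \<K>"

end

theory Submission
  imports Defs
begin

definition P4 :: "nat \<Rightarrow> nat \<Rightarrow> nat \<Rightarrow> nat \<Rightarrow> bool" where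
  "P4 i1 i2 i3 i4 \<longleftrightarrow> ((i1 < i2 \<and> i2 < i3 \<and> i3 < i4) \<or> (i2 < i3 \<and> i3 < i4 \<and> i4 < i1) \<or>
         (i3 < i4 \<and> i4 < i1 \<and> i1 < i2) \<or> (i4 < i1 \<and> i1 < i2 \<and> i2 < i3))"

definition pos :: "'a list \<Rightarrow> 'a \<Rightarrow> nat" where
  "pos cyc v = (SOME i. i < length cyc \<and> cyc ! i = v)"

lemma pos_prop:
  assumes "v \<in> set cyc" shows "pos cyc v < length cyc \<and> cyc ! pos cyc v = v"
proof -
  have "\<exists>i. i < length cyc \<and> cyc ! i = v" using assms by (simp add: in_set_conv_nth)
  then show ?thesis unfolding pos_def by (rule someI_ex)
qed

lemma pos_uniq:
  assumes "distinct cyc" "i < length cyc" "cyc ! i = v" shows "i = pos cyc v"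
proof -
  have v: "v \<in> set cyc" using assms by auto
  from pos_prop[OF v] assms show ?thesis using nth_eq_iff_index_eq by metis
qed

lemma pos_inj:
  assumes "distinct cyc" "u \<in> set cyc" "v \<in> set cyc" "pos cyc u = pos cyc v" shows "u = v"
  using pos_prop[OF assms(2)] pos_prop[OF assms(3)] assms(4) by metis

lemma cyc_order_pos:
  assumes "distinct cyc"
  shows "cyc_order cyc a b c d \<longleftrightarrow> a \<in> set cyc \<and> b \<in> set cyc \<and> c \<in> set cyc \<and> d \<in> set cyc \<and>
     P4 (pos cyc a) (pos cyc b) (pos cyc c) (pos cyc d)"
proof
  assume "cyc_order cyc a b c d"
  then obtain i1 i2 i3 i4 where h: "i1 < length cyc" "i2 < length cyc" "i3 < length cyc" "i4 < length cyc"
       "cyc ! i1 = a" "cyc ! i2 = b" "cyc ! i3 = c" "cyc ! i4 = d" "P4 i1 i2 i3 i4"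
    unfolding cyc_order_def P4_def by blast
  have "i1 = pos cyc a" "i2 = pos cyc b" "i3 = pos cyc c" "i4 = pos cyc d"
    using pos_uniq[OF assms] h by auto
  then show "a \<in> set cyc \<and> b \<in> set cyc \<and> c \<in> set cyc \<and> d \<in> set cyc \<and>
     P4 (pos cyc a) (pos cyc b) (pos cyc c) (pos cyc d)" using h by (metis nth_mem)
next
  assume h: "a \<in> set cyc \<and> b \<in> set cyc \<and> c \<in> set cyc \<and> d \<in> set cyc \<and>
     P4 (pos cyc a) (pos cyc b) (pos cyc c) (pos cyc d)"
  show "cyc_order cyc a b c d" unfolding cyc_order_def
    apply (rule exI[of _ "pos cyc a"], rule exI[of _ "pos cyc b"], rule exI[of _ "pos cyc c"],
       rule exI[of _ "pos cyc d"])
    using h pos_prop[of a cyc] pos_prop[of b cyc] pos_prop[of c cyc] pos_prop[of d cyc]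
    unfolding P4_def by auto
qed

lemma cyc_order_rot: "cyc_order cyc a b c d \<Longrightarrow> cyc_order cyc b c d a"
proof -
  assume "cyc_order cyc a b c d"
  then obtain i1 i2 i3 i4 where h: "i1 < length cyc" "i2 < length cyc" "i3 < length cyc" "i4 < length cyc"
       "cyc ! i1 = a" "cyc ! i2 = b" "cyc ! i3 = c" "cyc ! i4 = d" "P4 i1 i2 i3 i4"
    unfolding cyc_order_def P4_def by blast
  have "P4 i2 i3 i4 i1" using h(9) unfolding P4_def by blast
  then show ?thesis unfolding cyc_order_def P4_def using h(1-8) by blast
qed

lemma P4_side:
  fixes u v s t :: nat
  assumes "u \<noteq> v" "s \<noteq> u" "s \<noteq> v" "t \<noteq> u" "t \<noteq> v" "s \<noteq> t"
  shows "(P4 u s v t \<or> P4 u t v s) \<longleftrightarrow> ((min u v < s \<and> s < max u v) \<noteq> (min u v < t \<and> t < max u v))"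
  using assms unfolding P4_def min_def max_def by arith

definition sep :: "'a list \<Rightarrow> 'a \<Rightarrow> 'a \<Rightarrow> 'a \<Rightarrow> 'a \<Rightarrow> bool" where
  "sep cyc u v s t \<longleftrightarrow> cyc_order cyc u s v t \<or> cyc_order cyc u t v s"

lemma sep_sym: "sep cyc u v s t \<Longrightarrow> sep cyc s t u v"
  unfolding sep_def using cyc_order_rot by metis

lemma sep_refl: "distinct cyc \<Longrightarrow> \<not> sep cyc u v s s"
  unfolding sep_def by (auto simp: cyc_order_pos P4_def)

lemma sep_same: "distinct cyc \<Longrightarrow> \<not> sep cyc u u s t"
  unfolding sep_def by (auto simp: cyc_order_pos P4_def)

lemma sep_side:
  assumes "distinct cyc" "u \<in> set cyc" "v \<in> set cyc" "s \<in> set cyc" "t \<in> set cyc"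
    "u \<noteq> v" "s \<noteq> u" "s \<noteq> v" "t \<noteq> u" "t \<noteq> v"
  shows "sep cyc u v s t \<longleftrightarrow>
    ((min (pos cyc u) (pos cyc v) < pos cyc s \<and> pos cyc s < max (pos cyc u) (pos cyc v))
     \<noteq> (min (pos cyc u) (pos cyc v) < pos cyc t \<and> pos cyc t < max (pos cyc u) (pos cyc v)))"
proof -
  have d: "pos cyc u \<noteq> pos cyc v" "pos cyc s \<noteq> pos cyc u" "pos cyc s \<noteq> pos cyc v"
    "pos cyc t \<noteq> pos cyc u" "pos cyc t \<noteq> pos cyc v"
    using pos_inj[OF assms(1)] assms by metis+
  show ?thesis
  proof (cases "s = t")
    case True then show ?thesis using sep_refl[OF assms(1)] by auto
  next
    case False
    then have "pos cyc s \<noteq> pos cyc t" using pos_inj[OF assms(1)] assms by metis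
    then show ?thesis using d assms P4_side[of "pos cyc u" "pos cyc v" "pos cyc s" "pos cyc t"]
      unfolding sep_def cyc_order_pos[OF assms(1)] by simp
  qed
qed

lemma sep_trans:
  assumes "distinct cyc" "u \<in> set cyc" "v \<in> set cyc" "s \<in> set cyc" "t \<in> set cyc" "w \<in> set cyc"
    "s \<notin> {u,v}" "t \<notin> {u,v}" "w \<notin> {u,v}"
    "\<not> sep cyc u v s t" "\<not> sep cyc u v t w"
  shows "\<not> sep cyc u v s w"
proof (cases "u = v")
  case True then show ?thesis using sep_same[OF assms(1)] by auto
next
  case False
  then show ?thesis using assms sep_side[OF assms(1,2,3), of s t] sep_side[OF assms(1,2,3), of t w]
      sep_side[OF assms(1,2,3), of s w] by auto
qed

lemma cross:
  assumes op: "outerplanar_ham V E cyc"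
    and ST: "S \<subseteq> V" "T \<subseteq> V" "S \<inter> T = {}"
    and cS: "induced_connected E S" and cT: "induced_connected E T"
    and a: "a1 \<in> S" "a2 \<in> S" and x: "x1 \<in> T" "x2 \<in> T"
    and co: "cyc_order cyc a1 x1 a2 x2"
  shows False
proof -
  have sg: "simple_graph V E" and hc: "ham_cycle V E cyc"
    and nc: "\<not> (\<exists>a b c d. cyc_order cyc a b c d \<and> E a c \<and> E b d)"
    using op unfolding outerplanar_ham_def by auto
  have dist: "distinct cyc" and setc: "set cyc = V" using hc unfolding ham_cycle_def by auto
  have Esym: "\<And>u v. E u v \<Longrightarrow> E v u" and Eirr: "\<And>u v. E u v \<Longrightarrow> u \<noteq> v"
    using sg unfolding simple_graph_def by auto
  let ?RT = "\<lambda>u v. E u v \<and> u \<in> T \<and> v \<in> T"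
  let ?RS = "\<lambda>u v. E u v \<and> u \<in> S \<and> v \<in> S"
  have edge_nosep: "\<not> sep cyc u v y z" if "E u v" "E y z" for u v y z
  proof
    assume "sep cyc u v y z"
    then show False unfolding sep_def using nc that Esym by blast
  qed
  have step1: "\<not> sep cyc u v x1 y" if uv: "E u v" "u \<in> S" "v \<in> S" and r: "?RT\<^sup>*\<^sup>* x1 y" for u v y
    using r
  proof (induction rule: rtranclp_induct)
    case base then show ?case using sep_refl[OF dist] by blast
  next
    case (step y z)
    have "\<not> sep cyc u v y z" using edge_nosep uv step by blast
    then show ?case using sep_trans[OF dist, of u v x1 y z] step uv x ST setc by blast
  qed
  have x12: "?RT\<^sup>*\<^sup>* x1 x2" using cT x unfolding induced_connected_def by blast
  have "x1 \<noteq> x2" using co dist by (auto simp: cyc_order_pos P4_def)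
  have step2: "\<not> sep cyc x1 x2 a1 w" if r: "?RS\<^sup>*\<^sup>* a1 w" for w
    using r
  proof (induction rule: rtranclp_induct)
    case base then show ?case using sep_refl[OF dist] by blast
  next
    case (step y z)
    have "\<not> sep cyc y z x1 x2" using step1[OF _ _ _ x12, of y z] step by blast
    then have "\<not> sep cyc x1 x2 y z" using sep_sym by metis
    then show ?case using sep_trans[OF dist, of x1 x2 a1 y z] step a x ST setc by blast
  qed
  have "?RS\<^sup>*\<^sup>* a1 a2" using cS a unfolding induced_connected_def by blast
  then have "\<not> sep cyc x1 x2 a1 a2" by (rule step2)
  moreover have "sep cyc x1 x2 a1 a2"
    using cyc_order_rot[OF co] unfolding sep_def by blast
  ultimately show False by blast
qed

theorem mainTheorem13:
  fixes V :: "'a set" and E :: "'a \<Rightarrow> 'a \<Rightarrow> bool" and cyc :: "'a list"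
    and \<H> \<K> :: "'a set set"
  assumes "outerplanar_ham V E cyc"
    and "non_piercing V E \<H>"
    and "non_piercing V E \<K>"
  shows "strong_axax_free cyc \<H> \<K>"
proof -
  have ax: "axax_free cyc \<F>" if np: "non_piercing V E \<F>" for \<F>
    unfolding axax_free_def
  proof (intro ballI notI)
    fix H H' assume H: "H \<in> \<F>" "H' \<in> \<F>" "axax_pair cyc H H'"
    then obtain a1 x1 a2 x2 where o: "cyc_order cyc a1 x1 a2 x2" "a1 \<in> H - H'" "a2 \<in> H - H'"
      "x1 \<in> H'" "x2 \<in> H'" unfolding axax_pair_def by blast
    show False
      apply (rule cross[OF assms(1), of "H - H'" H' a1 a2 x1 x2])
      using np H o unfolding non_piercing_def by auto
  qed
  have ip: "intersection_property cyc \<H> \<K>"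
    unfolding intersection_property_def
  proof (intro ballI impI notI)
    fix H K assume H: "H \<in> \<H>" "K \<in> \<K>"
      "\<exists>h1 k1 h2 k2. cyc_order cyc h1 k1 h2 k2 \<and> h1 \<in> H \<and> h2 \<in> H \<and> k1 \<in> K \<and> k2 \<in> K"
      "H \<inter> K = {}"
    then obtain h1 k1 h2 k2 where o: "cyc_order cyc h1 k1 h2 k2" "h1 \<in> H" "h2 \<in> H" "k1 \<in> K" "k2 \<in> K"
      by blast
    show False
      apply (rule cross[OF assms(1), of H K h1 h2 k1 k2])
      using assms(2,3) H o unfolding non_piercing_def by auto
  qed
  show ?thesis unfolding strong_axax_free_def using ax assms ip by blast
qed

end
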